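(* Let $d>0$, let $\mathcal{S}$ be the 4-PAM constellation labeled by any Gray labeling, and let $\mathcal{B}$ be any rate-$1/2$ binary convolutional code generated by $\boldsymbol{G}(D)=[g_1(D),\,g_2(D)]$ with $g_1(D),g_2(D)$ nonzero binary polynomials. Then $\mathsf{L}(\mathcal{B})=0$.
   Context: $\mathcal{S}=\{s_1,s_2,s_3,s_4\}$ with $s_1=-3d$, $s_2=-d$, $s_3=d$, $s_4=3d$. A labeling is a bijection $\Phi_{\mathcal{S}}:\{0,1\}^2\to\mathcal{S}$, described by $\boldsymbol{q}=[q_1,\dots,q_4]$ where $q_i$ is the integer whose two-bit representation (most significant bit first) is $\Phi_{\mathcal{S}}^{-1}(s_i)$; the Gray labelings are $[0,1,3,2]$, $[0,2,3,1]$, $[1,0,2,3]$, $[2,0,1,3]$. The convolutional code $\mathcal{B}$ consists of the sequences $\boldsymbol{b}=(\boldsymbol{b}[k])_k$, $\boldsymbol{b}[k]=[b_1[k],b_2[k]]$, whose odd bits $b_1(D)=u(D)g_1(D)$ and even bits $b_2(D)=u(D)g_2(D)$, as $u(D)$ ranges over binary formal Laurent series (the same code is generated by $[1,\,g_2(D)/g_1(D)]$ and by $[g_1(D)/g_2(D),\,1]$). The CM code is $\mathcal{X}=\{(\Phi_{\mathcal{S}}(\boldsymbol{b}[k]))_k:\boldsymbol{b}\in\mathcal{B}\}$. For symbol sequences $\boldsymbol{x},\hat{\boldsymbol{x}}$ and each position $k$ with $x[k]\neq\hat{x}[k]$: $\mu^{\mathcal{X}}_k=\sigma^{2,\mathcal{X}}_k=(x[k]-\hat{x}[k])^2/(4d^2)$;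 $\mu^{\mathcal{B}}_k=\sigma^{2,\mathcal{B}}_k=(x[k]-\hat{x}[k])^2/(4d^2)$ except that if $\{x[k],\hat{x}[k]\}=\{s_1,s_4\}$ then $\mu^{\mathcal{B}}_k=3$, $\sigma^{2,\mathcal{B}}_k=1$. Summing over $k$ with $x[k]\neq\hat{x}[k]$, $a^{\mathcal{X}}(\boldsymbol{x},\hat{\boldsymbol{x}})=\sum_k\mu^{\mathcal{X}}_k/\sqrt{\sum_k\sigma^{2,\mathcal{X}}_k}$ and $a^{\mathcal{B}}(\boldsymbol{x},\hat{\boldsymbol{x}})=\sum_k\mu^{\mathcal{B}}_k/\sqrt{\sum_k\sigma^{2,\mathcal{B}}_k}$ (taken to be $+\infty$ if the sequences differ in infinitely many positions). The asymptotic loss of the code is $\mathsf{L}(\mathcal{B})=20\log_{10}\Big(\min_{\boldsymbol{x}\neq\hat{\boldsymbol{x}}\in\mathcal{X}}a^{\mathcal{X}}(\boldsymbol{x},\hat{\boldsymbol{x}})\big/\min_{\boldsymbol{x}\neq\hat{\boldsymbol{x}}\in\mathcal{X}}a^{\mathcal{B}}(\boldsymbol{x},\hat{\boldsymbol{x}})\Big)$ dB. *)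

theory Defs
  imports Complex_Main "HOL-Library.Extended_Real"
begin

text \<open>Binary formal Laurent series: sequences indexed by int whose support is bounded below.\<close>
definition laurent :: "(int \<Rightarrow> bool) \<Rightarrow> bool" where
  "laurent u \<longleftrightarrow> (\<exists>N. \<forall>k<N. \<not> u k)"

definition nonzero_bpoly :: "(nat \<Rightarrow> bool) \<Rightarrow> bool" where
  "nonzero_bpoly g \<longleftrightarrow> finite {j. g j} \<and> (\<exists>j. g j)"

text \<open>Coefficient k of the GF(2) product u(D) g(D).\<close>
definition bconv :: "(nat \<Rightarrow> bool) \<Rightarrow> (int \<Rightarrow> bool) \<Rightarrow> int \<Rightarrow> bool" where
  "bconv g u k = odd (card {j. g j \<and> u (k - int j)})"

text \<open>Symbols s_1..s_4 = -3d,-d,d,3d; 0-based index i gives (2i-3)d.\<close>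
definition pam :: "real \<Rightarrow> nat \<Rightarrow> real" where
  "pam d i = d * (2 * real i - 3)"

text \<open>Labeling Phi given by q: bits (b1,b2), b1 most significant, map to s_i with q_i = 2 b1 + b2.\<close>
definition label :: "nat list \<Rightarrow> real \<Rightarrow> bool \<Rightarrow> bool \<Rightarrow> real" where
  "label q d b1 b2 = pam d (THE i. i < 4 \<and> q ! i = 2 * of_bool b1 + of_bool b2)"

definition gray_labelings :: "nat list set" where
  "gray_labelings = {[0,1,3,2], [0,2,3,1], [1,0,2,3], [2,0,1,3]}"

definition cm_code :: "nat list \<Rightarrow> real \<Rightarrow> (nat \<Rightarrow> bool) \<Rightarrow> (nat \<Rightarrow> bool) \<Rightarrow> (int \<Rightarrow> real) set" where
  "cm_code q d g1 g2 = {(\<lambda>k. label q d (bconv g1 u k) (bconv g2 u k)) | u. laurent u}"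

definition diffset :: "(int \<Rightarrow> real) \<Rightarrow> (int \<Rightarrow> real) \<Rightarrow> int set" where
  "diffset x xh = {k. x k \<noteq> xh k}"

definition muX :: "real \<Rightarrow> real \<Rightarrow> real \<Rightarrow> real" where
  "muX d a b = (a - b)^2 / (4 * d^2)"

definition muB :: "real \<Rightarrow> real \<Rightarrow> real \<Rightarrow> real" where
  "muB d a b = (if {a, b} = {-3*d, 3*d} then 3 else (a - b)^2 / (4 * d^2))"

definition sigB :: "real \<Rightarrow> real \<Rightarrow> real \<Rightarrow> real" where
  "sigB d a b = (if {a, b} = {-3*d, 3*d} then 1 else (a - b)^2 / (4 * d^2))"

definition aX :: "real \<Rightarrow> (int \<Rightarrow> real) \<Rightarrow> (int \<Rightarrow> real) \<Rightarrow> ereal" where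
  "aX d x xh = (if finite (diffset x xh) then
     ereal ((\<Sum>k\<in>diffset x xh. muX d (x k) (xh k)) / sqrt (\<Sum>k\<in>diffset x xh. muX d (x k) (xh k)))
   else \<infinity>)"

definition aB :: "real \<Rightarrow> (int \<Rightarrow> real) \<Rightarrow> (int \<Rightarrow> real) \<Rightarrow> ereal" where
  "aB d x xh = (if finite (diffset x xh) then
     ereal ((\<Sum>k\<in>diffset x xh. muB d (x k) (xh k)) / sqrt (\<Sum>k\<in>diffset x xh. sigB d (x k) (xh k)))
   else \<infinity>)"

definition min_aX :: "nat list \<Rightarrow> real \<Rightarrow> (nat \<Rightarrow> bool) \<Rightarrow> (nat \<Rightarrow> bool) \<Rightarrow> ereal" where
  "min_aX q d g1 g2 = Inf {aX d x xh | x xh. x \<in> cm_code q d g1 g2 \<and> xh \<in> cm_code q d g1 g2 \<and> x \<noteq> xh}"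

definition min_aB :: "nat list \<Rightarrow> real \<Rightarrow> (nat \<Rightarrow> bool) \<Rightarrow> (nat \<Rightarrow> bool) \<Rightarrow> ereal" where
  "min_aB q d g1 g2 = Inf {aB d x xh | x xh. x \<in> cm_code q d g1 g2 \<and> xh \<in> cm_code q d g1 g2 \<and> x \<noteq> xh}"

definition asym_loss :: "nat list \<Rightarrow> real \<Rightarrow> (nat \<Rightarrow> bool) \<Rightarrow> (nat \<Rightarrow> bool) \<Rightarrow> real" where
  "asym_loss q d g1 g2 = 20 * log 10 (real_of_ereal (min_aX q d g1 g2) / real_of_ereal (min_aB q d g1 g2))"

end

theory Submission
  imports Defs
begin


definition lv :: "nat list \<Rightarrow> bool \<Rightarrow> bool \<Rightarrow> real" where
  "lv q b1 b2 = 2 * real (THE i. i < 4 \<and> q ! i = 2 * of_bool b1 + of_bool b2) - 3"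

lemma label_lv: "label q d b1 b2 = d * lv q b1 b2"
  by (simp add: label_def lv_def pam_def)

lemma lt4: "(i::nat) < 4 \<longleftrightarrow> i = 0 \<or> i = 1 \<or> i = 2 \<or> i = 3" by (auto simp: numeral_eq_Suc less_Suc_eq)
lemma lv1: "lv [0,1,3,2] b1 b2 = (if b1 then (if b2 then 1 else 3) else (if b2 then -1 else -3))"
proof -
  have "(THE i. i < 4 \<and> [0,1,3,2::nat] ! i = 2 * of_bool b1 + of_bool b2) = (if b1 then (if b2 then 2 else 3) else (if b2 then 1 else 0))"
    by (rule the_equality) (auto simp: lt4)
  then show ?thesis unfolding lv_def by auto
qed

lemma lv2: "lv [0,2,3,1] b1 b2 = (if b1 then (if b2 then 1 else -1) else (if b2 then 3 else -3))"
proof -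
  have "(THE i. i < 4 \<and> [0,2,3,1::nat] ! i = 2 * of_bool b1 + of_bool b2) = (if b1 then (if b2 then 2 else 1) else (if b2 then 3 else 0))"
    by (rule the_equality) (auto simp: lt4)
  then show ?thesis unfolding lv_def by auto
qed

lemma lv3: "lv [1,0,2,3] b1 b2 = (if b1 then (if b2 then 3 else 1) else (if b2 then -3 else -1))"
proof -
  have "(THE i. i < 4 \<and> [1,0,2,3::nat] ! i = 2 * of_bool b1 + of_bool b2) = (if b1 then (if b2 then 3 else 2) else (if b2 then 0 else 1))"
    by (rule the_equality) (auto simp: lt4)
  then show ?thesis unfolding lv_def by auto
qed

lemma lv4: "lv [2,0,1,3] b1 b2 = (if b1 then (if b2 then 3 else -3) else (if b2 then 1 else -1))"
proof -
  have "(THE i. i < 4 \<and> [2,0,1,3::nat] ! i = 2 * of_bool b1 + of_bool b2) = (if b1 then (if b2 then 3 else 0) else (if b2 then 2 else 1))"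
    by (rule the_equality) (auto simp: lt4)
  then show ?thesis unfolding lv_def by auto
qed

definition sigv :: "real \<Rightarrow> real \<Rightarrow> real" where
  "sigv a b = (if (a = -3 \<and> b = 3) \<or> (a = 3 \<and> b = -3) then 1 else (a-b)^2/4)"

lemma muX_scale: "(d::real) > 0 \<Longrightarrow> muX d (d*a) (d*b) = (a-b)^2/4"
  by (simp add: muX_def power2_eq_square field_simps)

lemma cancel_d: "(d::real) > 0 \<Longrightarrow> (d*x = c*d) = (x = c)"
  by (metis mult.commute mult_cancel_left order_less_irrefl)

lemma dbl_scale: "(d::real) > 0 \<Longrightarrow> ({d*a, d*b} = {-3*d, 3*d}) = ((a = -3 \<and> b = 3) \<or> (a = 3 \<and> b = -3))"
  unfolding doubleton_eq_iff using cancel_d[of d a "-3"] cancel_d[of d b "-3"] cancel_d[of d a 3] cancel_d[of d b 3]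
  by blast

lemma sq_scale: "(d::real) > 0 \<Longrightarrow> (d*a - d*b)^2/(4*d^2) = (a-b)^2/4"
proof -
  assume "d > 0"
  have "(d*a - d*b)^2 = d^2 * (a-b)^2" by (simp add: power_mult_distrib[symmetric] right_diff_distrib)
  then show ?thesis using \<open>d > 0\<close> by simp
qed

lemma sigB_scale: "(d::real) > 0 \<Longrightarrow> sigB d (d*a) (d*b) = sigv a b"
  unfolding sigB_def sigv_def by (simp only: dbl_scale sq_scale)

lemma pos1: "(d::real) > 0 \<Longrightarrow> b2 \<noteq> c2 \<Longrightarrow>
  muX d (label [0,1,3,2] d (b1\<noteq>c1) (b2\<noteq>c2)) (label [0,1,3,2] d (bh1\<noteq>c1) (bh2\<noteq>c2))
   \<le> sigB d (label [0,1,3,2] d b1 b2) (label [0,1,3,2] d bh1 bh2)"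
  unfolding label_lv lv1 by (simp only: muX_scale sigB_scale) (cases b1; cases b2; cases bh1; cases bh2; cases c1; cases c2; simp add: sigv_def)

lemma pos2: "(d::real) > 0 \<Longrightarrow> b1 \<noteq> c1 \<Longrightarrow>
  muX d (label [0,2,3,1] d (b1\<noteq>c1) (b2\<noteq>c2)) (label [0,2,3,1] d (bh1\<noteq>c1) (bh2\<noteq>c2))
   \<le> sigB d (label [0,2,3,1] d b1 b2) (label [0,2,3,1] d bh1 bh2)"
  unfolding label_lv lv2 by (simp only: muX_scale sigB_scale) (cases b1; cases b2; cases bh1; cases bh2; cases c1; cases c2; simp add: sigv_def)

lemma pos3: "(d::real) > 0 \<Longrightarrow> b2 = c2 \<Longrightarrow>
  muX d (label [1,0,2,3] d (b1\<noteq>c1) (b2\<noteq>c2)) (label [1,0,2,3] d (bh1\<noteq>c1) (bh2\<noteq>c2))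
   \<le> sigB d (label [1,0,2,3] d b1 b2) (label [1,0,2,3] d bh1 bh2)"
  unfolding label_lv lv3 by (simp only: muX_scale sigB_scale) (cases b1; cases b2; cases bh1; cases bh2; cases c1; cases c2; simp add: sigv_def)

lemma pos4: "(d::real) > 0 \<Longrightarrow> b1 = c1 \<Longrightarrow>
  muX d (label [2,0,1,3] d (b1\<noteq>c1) (b2\<noteq>c2)) (label [2,0,1,3] d (bh1\<noteq>c1) (bh2\<noteq>c2))
   \<le> sigB d (label [2,0,1,3] d b1 b2) (label [2,0,1,3] d bh1 bh2)"
  unfolding label_lv lv4 by (simp only: muX_scale sigB_scale) (cases b1; cases b2; cases bh1; cases bh2; cases c1; cases c2; simp add: sigv_def)

lemma label_inj: "(d::real) > 0 \<Longrightarrow> q \<in> gray_labelings \<Longrightarrow> (label q d a b = label q d a' b') = (a = a' \<and> b = b')"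
  unfolding label_lv gray_labelings_def
  by (auto simp only: insert_iff empty_iff lv1 lv2 lv3 lv4 mult_cancel_left; cases a; cases b; cases a'; cases b'; simp)



lemma card_symdiff_parity:
  assumes "finite A" "finite B"
  shows "odd (card ((A-B) \<union> (B-A))) = (odd (card A) \<noteq> odd (card B))"
proof -
  have "card ((A-B) \<union> (B-A)) = card (A-B) + card (B-A)"
    by (rule card_Un_disjoint) (use assms in auto)
  moreover have "card (A-B) = card A - card (A\<inter>B)" using assms by (simp add: card_Diff_subset_Int)
  moreover have "card (B-A) = card B - card (A\<inter>B)" using assms by (simp add: card_Diff_subset_Int Int_commute)
  moreover have "card (A\<inter>B) \<le> card A" "card (A\<inter>B) \<le> card B" using assms by (auto intro: card_mono)
  ultimately show ?thesis by presburger
qed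

lemma bconv_xor:
  assumes "finite {j. g j}"
  shows "bconv g (\<lambda>n. u n \<noteq> w n) k = (bconv g u k \<noteq> bconv g w k)"
proof -
  let ?A = "{j. g j \<and> u (k - int j)}" and ?B = "{j. g j \<and> w (k - int j)}"
  have fA: "finite ?A" "finite ?B" using assms by (auto intro: finite_subset)
  have "{j. g j \<and> (u (k - int j) \<noteq> w (k - int j))} = (?A - ?B) \<union> (?B - ?A)" by auto
  then show ?thesis unfolding bconv_def using card_symdiff_parity[OF fA] by simp
qed

lemma laurent_xor: "laurent u \<Longrightarrow> laurent w \<Longrightarrow> laurent (\<lambda>n. u n \<noteq> w n)"
  unfolding laurent_def
  by (metis min.strict_boundedE)

lemma bconv_local:
  assumes "\<And>j. g j \<Longrightarrow> u (k - int j) = w (k - int j)"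
  shows "bconv g u k = bconv g w k"
proof -
  have "{j. g j \<and> u (k - int j)} = {j. g j \<and> w (k - int j)}" using assms by auto
  then show ?thesis unfolding bconv_def by simp
qed

lemma ctrl_step:
  assumes fin: "finite {j. g j}" and j0: "g j0" and min: "\<And>j. g j \<Longrightarrow> j0 \<le> j"
  shows "\<exists>u'. (\<forall>k<p + int j0. bconv g u' k = bconv g u k) \<and> bconv g u' (p + int j0) = t
        \<and> (\<forall>m. m \<noteq> p \<longrightarrow> u' m = u m)"
proof (cases "bconv g u (p + int j0) = t")
  case True
  then show ?thesis by (intro exI[of _ u]) auto
next
  case False
  define u' where "u' = u(p := \<not> u p)"
  have loc: "bconv g u' k = bconv g u k" if "k < p + int j0" for k
    by (rule bconv_local) (use that min in \<open>force simp: u'_def\<close>)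
  let ?k = "p + int j0"
  let ?A = "{j. g j \<and> u (?k - int j)}" and ?A' = "{j. g j \<and> u' (?k - int j)}"
  have fA: "finite ?A" using fin by (auto intro: finite_subset)
  have eqj: "(?k - int j = p) = (j = j0)" for j by auto
  have "odd (card ?A') \<noteq> odd (card ?A)"
  proof (cases "u p")
    case True
    then have "j0 \<in> ?A" "?A' = ?A - {j0}" using j0 eqj by (auto simp: u'_def)
    then have "card ?A' = card ?A - 1" "card ?A \<ge> 1" using fA
      by (auto simp: card_gt_0_iff Suc_le_eq)
    then show ?thesis by presburger
  next
    case F: False
    then have "j0 \<notin> ?A" "?A' = insert j0 ?A" using j0 eqj by (auto simp: u'_def)
    then have "card ?A' = card ?A + 1" using fA by simp
    then show ?thesis by presburger
  qed
  then have "bconv g u' ?k = t" using False unfolding bconv_def by auto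
  then show ?thesis using loc by (intro exI[of _ u']) (auto simp: u'_def)
qed

lemma ctrl_ind:
  assumes fin: "finite {j. g j}" and j0: "g j0" and min: "\<And>j. g j \<Longrightarrow> j0 \<le> j"
  shows "\<exists>u. (\<forall>m<N. \<not> u m) \<and> (\<forall>k. N + int j0 \<le> k \<and> k < N + int j0 + int n \<longrightarrow> bconv g u k = t k)"
proof (induction n)
  case 0
  then show ?case by (intro exI[of _ "\<lambda>_. False"]) auto
next
  case (Suc n)
  then obtain u where u0: "\<forall>m<N. \<not> u m"
    and u1: "\<forall>k. N + int j0 \<le> k \<and> k < N + int j0 + int n \<longrightarrow> bconv g u k = t k" by blast
  obtain u' where a: "\<forall>k<(N + int n) + int j0. bconv g u' k = bconv g u k"
    and b: "bconv g u' ((N + int n) + int j0) = t ((N + int n) + int j0)"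
    and c: "\<forall>m. m \<noteq> N + int n \<longrightarrow> u' m = u m"
    using ctrl_step[OF fin j0 min, of "N + int n" u "t ((N + int n) + int j0)"] by blast
  show ?case
  proof (intro exI[of _ u'] conjI allI impI)
    fix m assume "m < N" then show "\<not> u' m" using u0 c by auto
  next
    fix k assume k: "N + int j0 \<le> k \<and> k < N + int j0 + int (Suc n)"
    show "bconv g u' k = t k"
    proof (cases "k = N + int n + int j0")
      case True then show ?thesis using b by simp
    next
      case False then show ?thesis using a u1 k by auto
    qed
  qed
qed

lemma ctrl:
  assumes g: "nonzero_bpoly g" and F: "finite F"
  shows "\<exists>u. laurent u \<and> (\<forall>k\<in>F. bconv g u k = t k)"
proof (cases "F = {}")
  case True then show ?thesis by (intro exI[of _ "\<lambda>_. False"]) (auto simp: laurent_def)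
next
  case False
  have fin: "finite {j. g j}" and ne: "{j. g j} \<noteq> {}" using g by (auto simp: nonzero_bpoly_def)
  define j0 where "j0 = Min {j. g j}"
  have j0: "g j0" using Min_in[OF fin ne] by (simp add: j0_def)
  have min: "j0 \<le> j" if "g j" for j using Min_le[OF fin] that by (simp add: j0_def)
  define lo where "lo = Min F"
  define hi where "hi = Max F"
  obtain u where u0: "\<forall>m<lo - int j0. \<not> u m"
    and u1: "\<forall>k. lo - int j0 + int j0 \<le> k \<and> k < lo - int j0 + int j0 + int (nat (hi - lo + 1)) \<longrightarrow> bconv g u k = t k"
    using ctrl_ind[OF fin j0 min, of "lo - int j0" "nat (hi - lo + 1)" t] by blast
  have "laurent u" using u0 by (auto simp: laurent_def)
  moreover have "\<forall>k\<in>F. bconv g u k = t k"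
  proof
    fix k assume "k \<in> F"
    then have "lo \<le> k" "k \<le> hi" using F by (auto simp: lo_def hi_def)
    then show "bconv g u k = t k" using u1 by auto
  qed
  ultimately show ?thesis by blast
qed



lemma muX_nonneg: "muX d a b \<ge> 0" by (simp add: muX_def)

lemma muX_P: "(d::real) > 0 \<Longrightarrow> {a, b} = {-3*d, 3*d} \<Longrightarrow> muX d a b = 9"
  unfolding muX_def doubleton_eq_iff by (auto simp: power2_eq_square field_simps)

lemma sigB_le_muB: "sigB d a b \<le> muB d a b"
  unfolding sigB_def muB_def by simp

lemma sigB_pos: "(d::real) > 0 \<Longrightarrow> a \<noteq> b \<Longrightarrow> sigB d a b > 0"
  unfolding sigB_def by simp

lemma ineq1:
  fixes R m :: real assumes "0 \<le> R" "0 \<le> m"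
  shows "(R + 3*m) / sqrt (R + m) \<le> (R + 9*m) / sqrt (R + 9*m)"
proof (cases "R + m = 0")
  case True then show ?thesis using assms by simp
next
  case False
  then have pos: "R + m > 0" using assms by simp
  have r: "(R + 9*m) / sqrt (R + 9*m) = sqrt (R + 9*m)" using assms by (simp add: real_div_sqrt)
  have "(R + 3*m)^2 \<le> (R + 9*m) * (R + m)" using assms by (simp add: power2_eq_square algebra_simps)
  then have "R + 3*m \<le> sqrt ((R + 9*m) * (R + m))" by (rule real_le_rsqrt)
  then have "R + 3*m \<le> sqrt (R + 9*m) * sqrt (R + m)" by (simp add: real_sqrt_mult)
  then show ?thesis unfolding r using pos by (simp add: pos_divide_le_eq)
qed

lemma ineq2:
  fixes S T M :: real assumes "0 \<le> S" "S \<le> T" "T \<le> M" "0 < T"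
  shows "S / sqrt S \<le> M / sqrt T"
proof -
  have "S / sqrt S = sqrt S" using assms by (simp add: real_div_sqrt)
  also have "\<dots> \<le> sqrt T" using assms by simp
  also have "\<dots> = T / sqrt T" using assms by (simp add: real_div_sqrt)
  also have "\<dots> \<le> M / sqrt T" using assms by (simp add: divide_right_mono)
  finally show ?thesis .
qed

lemma aB_le_aX:
  assumes d: "(d::real) > 0"
  shows "aB d x xh \<le> aX d x xh"
proof (cases "finite (diffset x xh)")
  case False then show ?thesis by (simp add: aB_def aX_def)
next
  case True
  define D where "D = diffset x xh"
  define P where "P = {k\<in>D. {x k, xh k} = {-3*d, 3*d}}"
  define R where "R = (\<Sum>k\<in>D-P. muX d (x k) (xh k))"
  define m where "m = real (card P)"
  have fD: "finite D" using True by (simp add: D_def)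
  have PD: "P \<subseteq> D" by (auto simp: P_def)
  have R0: "R \<ge> 0" unfolding R_def by (rule sum_nonneg) (simp add: muX_nonneg)
  have m0: "m \<ge> 0" by (simp add: m_def)
  have S: "(\<Sum>k\<in>D. muX d (x k) (xh k)) = R + 9*m"
  proof -
    have "(\<Sum>k\<in>D. muX d (x k) (xh k)) = R + (\<Sum>k\<in>P. muX d (x k) (xh k))"
      unfolding R_def using sum.subset_diff[OF PD fD] by simp
    also have "(\<Sum>k\<in>P. muX d (x k) (xh k)) = (\<Sum>k\<in>P. 9)"
      by (rule sum.cong) (auto simp: P_def muX_P[OF d])
    finally show ?thesis by (simp add: m_def)
  qed
  have M: "(\<Sum>k\<in>D. muB d (x k) (xh k)) = R + 3*m"
  proof -
    have "(\<Sum>k\<in>D. muB d (x k) (xh k)) = (\<Sum>k\<in>D-P. muB d (x k) (xh k)) + (\<Sum>k\<in>P. muB d (x k) (xh k))"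
      using sum.subset_diff[OF PD fD] by simp
    also have "(\<Sum>k\<in>D-P. muB d (x k) (xh k)) = R"
      unfolding R_def by (rule sum.cong) (auto simp: P_def muB_def muX_def)
    also have "(\<Sum>k\<in>P. muB d (x k) (xh k)) = (\<Sum>k\<in>P. 3)"
      by (rule sum.cong) (auto simp: P_def muB_def)
    finally show ?thesis by (simp add: m_def)
  qed
  have T: "(\<Sum>k\<in>D. sigB d (x k) (xh k)) = R + m"
  proof -
    have "(\<Sum>k\<in>D. sigB d (x k) (xh k)) = (\<Sum>k\<in>D-P. sigB d (x k) (xh k)) + (\<Sum>k\<in>P. sigB d (x k) (xh k))"
      using sum.subset_diff[OF PD fD] by simp
    also have "(\<Sum>k\<in>D-P. sigB d (x k) (xh k)) = R"
      unfolding R_def by (rule sum.cong) (auto simp: P_def sigB_def muX_def)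
    also have "(\<Sum>k\<in>P. sigB d (x k) (xh k)) = (\<Sum>k\<in>P. 1)"
      by (rule sum.cong) (auto simp: P_def sigB_def)
    finally show ?thesis by (simp add: m_def)
  qed
  show ?thesis using True ineq1[OF R0 m0]
    unfolding aB_def aX_def D_def[symmetric] S M T by simp
qed



lemma cm_mem: "x \<in> cm_code q d g1 g2 \<longleftrightarrow> (\<exists>u. laurent u \<and> x = (\<lambda>k. label q d (bconv g1 u k) (bconv g2 u k)))"
  unfolding cm_code_def by auto

lemma key:
  assumes d: "(d::real) > 0" and q: "q \<in> gray_labelings"
    and g1: "nonzero_bpoly g1" and g2: "nonzero_bpoly g2"
    and u: "laurent u" and uh: "laurent uh"
    and x: "x = (\<lambda>k. label q d (bconv g1 u k) (bconv g2 u k))"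
    and xh: "xh = (\<lambda>k. label q d (bconv g1 uh k) (bconv g2 uh k))"
    and ne: "x \<noteq> xh" and fin: "finite (diffset x xh)"
  shows "\<exists>x' xh'. x' \<in> cm_code q d g1 g2 \<and> xh' \<in> cm_code q d g1 g2 \<and> x' \<noteq> xh' \<and> aX d x' xh' \<le> aB d x xh"
proof -
  define D where "D = diffset x xh"
  define b1 where "b1 = bconv g1 u" define b2 where "b2 = bconv g2 u"
  define bh1 where "bh1 = bconv g1 uh" define bh2 where "bh2 = bconv g2 uh"
  have fD: "finite D" using fin by (simp add: D_def)
  have "\<exists>w. laurent w \<and> (\<forall>k\<in>D. muX d (label q d (b1 k \<noteq> bconv g1 w k) (b2 k \<noteq> bconv g2 w k))
                 (label q d (bh1 k \<noteq> bconv g1 w k) (bh2 k \<noteq> bconv g2 w k))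
              \<le> sigB d (label q d (b1 k) (b2 k)) (label q d (bh1 k) (bh2 k)))"
  proof -
    consider "q = [0,1,3,2]" | "q = [0,2,3,1]" | "q = [1,0,2,3]" | "q = [2,0,1,3]"
      using q unfolding gray_labelings_def by blast
    then show ?thesis
    proof cases
      case 1
      obtain w where "laurent w" "\<forall>k\<in>D. bconv g2 w k = (\<not> b2 k)" using ctrl[OF g2 fD, of "\<lambda>k. \<not> b2 k"] by blast
      note wh = this
      show ?thesis
      proof (intro exI[of _ w] conjI ballI)
        show "laurent w" by (rule wh(1))
        fix k assume "k \<in> D"
        then have "b2 k \<noteq> bconv g2 w k" using wh(2) by simp
        then show "muX d (label q d (b1 k \<noteq> bconv g1 w k) (b2 k \<noteq> bconv g2 w k))
                 (label q d (bh1 k \<noteq> bconv g1 w k) (bh2 k \<noteq> bconv g2 w k))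
              \<le> sigB d (label q d (b1 k) (b2 k)) (label q d (bh1 k) (bh2 k))"
          unfolding 1 by (rule pos1[OF d])
      qed
    next
      case 2
      obtain w where "laurent w" "\<forall>k\<in>D. bconv g1 w k = (\<not> b1 k)" using ctrl[OF g1 fD, of "\<lambda>k. \<not> b1 k"] by blast
      note wh = this
      show ?thesis
      proof (intro exI[of _ w] conjI ballI)
        show "laurent w" by (rule wh(1))
        fix k assume "k \<in> D"
        then have "b1 k \<noteq> bconv g1 w k" using wh(2) by simp
        then show "muX d (label q d (b1 k \<noteq> bconv g1 w k) (b2 k \<noteq> bconv g2 w k))
                 (label q d (bh1 k \<noteq> bconv g1 w k) (bh2 k \<noteq> bconv g2 w k))
              \<le> sigB d (label q d (b1 k) (b2 k)) (label q d (bh1 k) (bh2 k))"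
          unfolding 2 by (rule pos2[OF d])
      qed
    next
      case 3
      obtain w where "laurent w" "\<forall>k\<in>D. bconv g2 w k = b2 k" using ctrl[OF g2 fD, of b2] by blast
      note wh = this
      show ?thesis
      proof (intro exI[of _ w] conjI ballI)
        show "laurent w" by (rule wh(1))
        fix k assume "k \<in> D"
        then have "b2 k = bconv g2 w k" using wh(2) by simp
        then show "muX d (label q d (b1 k \<noteq> bconv g1 w k) (b2 k \<noteq> bconv g2 w k))
                 (label q d (bh1 k \<noteq> bconv g1 w k) (bh2 k \<noteq> bconv g2 w k))
              \<le> sigB d (label q d (b1 k) (b2 k)) (label q d (bh1 k) (bh2 k))"
          unfolding 3 by (rule pos3[OF d])
      qed
    next
      case 4
      obtain w where "laurent w" "\<forall>k\<in>D. bconv g1 w k = b1 k" using ctrl[OF g1 fD, of b1] by blast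
      note wh = this
      show ?thesis
      proof (intro exI[of _ w] conjI ballI)
        show "laurent w" by (rule wh(1))
        fix k assume "k \<in> D"
        then have "b1 k = bconv g1 w k" using wh(2) by simp
        then show "muX d (label q d (b1 k \<noteq> bconv g1 w k) (b2 k \<noteq> bconv g2 w k))
                 (label q d (bh1 k \<noteq> bconv g1 w k) (bh2 k \<noteq> bconv g2 w k))
              \<le> sigB d (label q d (b1 k) (b2 k)) (label q d (bh1 k) (bh2 k))"
          unfolding 4 by (rule pos4[OF d])
      qed
    qed
  qed
  then obtain w where w: "laurent w" and wpos: "\<forall>k\<in>D. muX d (label q d (b1 k \<noteq> bconv g1 w k) (b2 k \<noteq> bconv g2 w k))
                 (label q d (bh1 k \<noteq> bconv g1 w k) (bh2 k \<noteq> bconv g2 w k))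
              \<le> sigB d (label q d (b1 k) (b2 k)) (label q d (bh1 k) (bh2 k))" by blast
  define u' where "u' = (\<lambda>n. u n \<noteq> w n)"
  define uh' where "uh' = (\<lambda>n. uh n \<noteq> w n)"
  define x' where "x' = (\<lambda>k. label q d (bconv g1 u' k) (bconv g2 u' k))"
  define xh' where "xh' = (\<lambda>k. label q d (bconv g1 uh' k) (bconv g2 uh' k))"
  have fg1: "finite {j. g1 j}" and fg2: "finite {j. g2 j}" using g1 g2 by (auto simp: nonzero_bpoly_def)
  have x'k: "x' k = label q d (b1 k \<noteq> bconv g1 w k) (b2 k \<noteq> bconv g2 w k)" for k
    unfolding x'_def u'_def b1_def b2_def bconv_xor[OF fg1] bconv_xor[OF fg2] ..
  have xh'k: "xh' k = label q d (bh1 k \<noteq> bconv g1 w k) (bh2 k \<noteq> bconv g2 w k)" for k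
    unfolding xh'_def uh'_def bh1_def bh2_def bconv_xor[OF fg1] bconv_xor[OF fg2] ..
  have xk: "x k = label q d (b1 k) (b2 k)" and xhk: "xh k = label q d (bh1 k) (bh2 k)" for k
    by (simp_all add: x xh b1_def b2_def bh1_def bh2_def)
  have Deq: "diffset x' xh' = D"
    unfolding diffset_def D_def x'k xh'k xk xhk label_inj[OF d q] by (intro Collect_cong) blast
  have x'm: "x' \<in> cm_code q d g1 g2" unfolding cm_mem x'_def u'_def using laurent_xor[OF u w] by blast
  have xh'm: "xh' \<in> cm_code q d g1 g2" unfolding cm_mem xh'_def uh'_def using laurent_xor[OF uh w] by blast
  obtain k0 where "x k0 \<noteq> xh k0" using ne by auto
  then have k0: "k0 \<in> D" by (simp add: D_def diffset_def)
  then have ne': "x' \<noteq> xh'" using Deq by (auto simp: diffset_def)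
  let ?S = "\<Sum>k\<in>D. muX d (x' k) (xh' k)"
  let ?T = "\<Sum>k\<in>D. sigB d (x k) (xh k)"
  let ?M = "\<Sum>k\<in>D. muB d (x k) (xh k)"
  have S0: "0 \<le> ?S" by (rule sum_nonneg) (simp add: muX_nonneg)
  have ST: "?S \<le> ?T" unfolding x'k xh'k xk xhk by (rule sum_mono) (use wpos in auto)
  have TM: "?T \<le> ?M" by (rule sum_mono) (simp add: sigB_le_muB)
  have T0: "0 < ?T" by (rule sum_pos) (use fD k0 d sigB_pos in \<open>auto simp: D_def diffset_def\<close>)
  have "aX d x' xh' \<le> aB d x xh"
    unfolding aX_def aB_def Deq D_def[symmetric] using fD ineq2[OF S0 ST TM T0] by simp
  then show ?thesis using x'm xh'm ne' by blast
qed

theorem theorem4: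
  fixes d :: real and q :: "nat list" and g1 g2 :: "nat \<Rightarrow> bool"
  assumes "d > 0"
    and "q \<in> gray_labelings"
    and "nonzero_bpoly g1" and "nonzero_bpoly g2"
  shows "asym_loss q d g1 g2 = 0"
proof -
  have "min_aB q d g1 g2 \<le> min_aX q d g1 g2"
    unfolding min_aB_def min_aX_def
  proof (rule Inf_greatest)
    fix y assume "y \<in> {aX d x xh |x xh. x \<in> cm_code q d g1 g2 \<and> xh \<in> cm_code q d g1 g2 \<and> x \<noteq> xh}"
    then obtain x xh where y: "y = aX d x xh" and c: "x \<in> cm_code q d g1 g2" "xh \<in> cm_code q d g1 g2" "x \<noteq> xh" by blast
    have "Inf {aB d x xh |x xh. x \<in> cm_code q d g1 g2 \<and> xh \<in> cm_code q d g1 g2 \<and> x \<noteq> xh} \<le> aB d x xh"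
      by (rule Inf_lower) (use c in blast)
    also have "\<dots> \<le> y" unfolding y by (rule aB_le_aX[OF assms(1)])
    finally show "Inf {aB d x xh |x xh. x \<in> cm_code q d g1 g2 \<and> xh \<in> cm_code q d g1 g2 \<and> x \<noteq> xh} \<le> y" .
  qed
  moreover have "min_aX q d g1 g2 \<le> min_aB q d g1 g2"
    unfolding min_aB_def min_aX_def
  proof (rule Inf_greatest)
    fix y assume "y \<in> {aB d x xh |x xh. x \<in> cm_code q d g1 g2 \<and> xh \<in> cm_code q d g1 g2 \<and> x \<noteq> xh}"
    then obtain x xh where y: "y = aB d x xh" and c: "x \<in> cm_code q d g1 g2" "xh \<in> cm_code q d g1 g2" "x \<noteq> xh" by blast
    show "Inf {aX d x xh |x xh. x \<in> cm_code q d g1 g2 \<and> xh \<in> cm_code q d g1 g2 \<and> x \<noteq> xh} \<le> y"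
    proof (cases "finite (diffset x xh)")
      case False then show ?thesis unfolding y aB_def by simp
    next
      case True
      obtain u where u: "laurent u" "x = (\<lambda>k. label q d (bconv g1 u k) (bconv g2 u k))" using c(1) cm_mem by blast
      obtain uh where uh: "laurent uh" "xh = (\<lambda>k. label q d (bconv g1 uh k) (bconv g2 uh k))" using c(2) cm_mem by blast
      obtain x' xh' where k: "x' \<in> cm_code q d g1 g2" "xh' \<in> cm_code q d g1 g2" "x' \<noteq> xh'" "aX d x' xh' \<le> aB d x xh"
        using key[OF assms u(1) uh(1) u(2) uh(2) c(3) True] by blast
      have "Inf {aX d x xh |x xh. x \<in> cm_code q d g1 g2 \<and> xh \<in> cm_code q d g1 g2 \<and> x \<noteq> xh} \<le> aX d x' xh'"
        by (rule Inf_lower) (use k in blast)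
      also have "\<dots> \<le> y" using k(4) y by simp
      finally show ?thesis .
    qed
  qed
  ultimately have eq: "min_aX q d g1 g2 = min_aB q d g1 g2" by (rule antisym[rotated])
  show ?thesis unfolding asym_loss_def eq
    by (cases "real_of_ereal (min_aB q d g1 g2) = 0") (simp_all add: log_def)
qed


end
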